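(* For every set of formulas $\Gamma$ and every formula $\phi$: if $\Gamma\vdash\phi$ then $\Gamma\vDash\phi$. That is, the logic $\vdash$ is sound with respect to the class of continuous t-norms.
   Context: Fix a countable predicate language $\mathcal L$ consisting of variables, constant symbols and predicate symbols (so terms are just variables and constants), with connectives $\to$, $\&$, the propositional constant $0$ and quantifiers $\forall,\exists$. Abbreviations: $\phi\wedge\psi$ is $\phi\&(\phi\to\psi)$; $\phi\vee\psi$ is $((\phi\to\psi)\to\psi)\wedge((\psi\to\phi)\to\phi)$; $\neg\phi$ is $\phi\to 0$; $1$ is $0\to 0$; $\beta^n$ is $\beta\&\cdots\&\beta$ ($n$ factors). $\phi(x/t)$ denotes the result of substituting the term $t$ for the free occurrences of $x$ in $\phi$. A sentence is a formula with no free variables; a theory is any set of formulas. Hájek's basic predicate logic BL$\forall$ has the axiom schemata (A1) $(\phi\to\psi)\to((\psi\to\chi)\to(\phi\to\chi))$; (A2) $(\phi\&\psi)\to\phi$; (A3) $(\phi\&\psi)\to(\psi\&\phi)$; (A4) $(\phi\&(\phi\to\psi))\to(\psi\&(\psi\to\phi))$; (A5) $(\phi\to(\psi\to\chi))\to((\phi\&\psi)\to\chi)$; (A6) $((\phi\&\psi)\to\chi)\to(\phi\to(\psi\to\chi))$; (A7) $((\phi\to\psi)\to\chi)\to(((\psi\to\phi)\to\chi)\to\chi)$; (A8) $0\to\phi$; ($\forall$1) $\forall x\phi\to\phi(x/t)$ and ($\exists$1) $\phi(x/t)\to\exists x\phi$, for $t$ substitutable for $x$ in $\phi$; ($\forall$2)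 $\forall x(\phi\to\psi)\to(\phi\to\forall x\psi)$, ($\exists$2) $\forall x(\psi\to\phi)\to(\exists x\psi\to\phi)$ and (Lin) $\forall x(\psi\vee\phi)\to((\forall x\psi)\vee\phi)$, each with $x$ not free in $\phi$; its rules are modus ponens (from $\phi$ and $\phi\to\psi$ infer $\psi$) and generalization (from $\phi$ infer $\forall x\phi$). The logic $\vdash$ extends BL$\forall$ by the axiom schema (RC) $\forall x(\chi\&\chi)\to((\forall x\chi)\&(\forall x\chi))$ for every formula $\chi$, and the infinitary rule (Inf): from all of $\phi\vee(\alpha\to\beta^n)$, $n\in\mathbb N$, infer $\phi\vee(\alpha\to(\alpha\&\beta))$, where $\phi,\alpha,\beta$ are sentences. A proof from $\Gamma$ is a sequence $(\phi_i)_{i\le\xi}$ indexed by the ordinals up to some ordinal $\xi$ such that each $\phi_i$ is an axiom of BL$\forall$, an instance of (RC), a member of $\Gamma$, or is obtained from formulas in $\{\phi_j: j<i\}$ by modus ponens, generalization, or (Inf). $\Gamma\vdash\phi$ means there is a proof from $\Gamma$ whose last member is $\phi$. Semantics: a continuous t-norm is a continuous binary operation $\cdot$ on $[0,1]$ that is commutative, associative, monotone in each argument and has $1$ as unit; it is regarded as the algebra $([0,1],\cdot,\to,\min,\max,0,1)$ where $\to$ is its residuum ($x\cdot y\le z$ iff $x\le y\to z$). For such a $\mathbf B$, a $\mathbf B$-structure $\mathbf M$ consists of a nonempty set $M$, an element $c^{\mathbf M}\in M$ for each constant $c$, and a function $P^{\mathbf M}:M^n\to[0,1]$ for each $n$-ary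 predicate $P$. For a valuation $v$ (a map from variables to $M$), $\|\phi\|^{\mathbf M,v}$ is defined inductively: $\|P(t_1,\dots,t_n)\|^{\mathbf M,v}=P^{\mathbf M}(t_1^{\mathbf M,v},\dots,t_n^{\mathbf M,v})$ (with $c^{\mathbf M,v}=c^{\mathbf M}$, $x^{\mathbf M,v}=v(x)$), $\|0\|=0$, $\&$ and $\to$ are interpreted by $\cdot$ and its residuum, $\|\forall x\psi\|^{\mathbf M,v}=\inf\{\|\psi\|^{\mathbf M,w}:w\equiv_x v\}$ and $\|\exists x\psi\|^{\mathbf M,v}=\sup\{\|\psi\|^{\mathbf M,w}:w\equiv_x v\}$, where $w\equiv_x v$ means $w$ agrees with $v$ except possibly at $x$. $\mathbf M$ is a model of $\phi$ if $\|\phi\|^{\mathbf M,v}=1$ for every valuation $v$, and a model of a set $\Gamma$ if it is a model of each member. $\Gamma\vDash\phi$ means: for every continuous t-norm $\mathbf B$ and every $\mathbf B$-structure $\mathbf M$, if $\mathbf M$ is a model of $\Gamma$ then $\mathbf M$ is a model of $\phi$. *)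

theory Defs
  imports Complex_Main "HOL-Library.Countable"
begin

datatype 'c trm = Var nat | Cst 'c

datatype ('c, 'p) fm =
    Pred 'p "'c trm list"
  | Imp "('c, 'p) fm" "('c, 'p) fm"
  | SConj "('c, 'p) fm" "('c, 'p) fm"
  | Zero
  | All nat "('c, 'p) fm"
  | Ex nat "('c, 'p) fm"

fun wff :: "('p \<Rightarrow> nat) \<Rightarrow> ('c, 'p) fm \<Rightarrow> bool" where
  "wff ar (Pred P ts) = (length ts = ar P)"
| "wff ar (Imp a b) = (wff ar a \<and> wff ar b)"
| "wff ar (SConj a b) = (wff ar a \<and> wff ar b)"
| "wff ar Zero = True"
| "wff ar (All x a) = wff ar a"
| "wff ar (Ex x a) = wff ar a"

fun tvars :: "'c trm \<Rightarrow> nat set" where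
  "tvars (Var x) = {x}"
| "tvars (Cst c) = {}"

fun fv :: "('c, 'p) fm \<Rightarrow> nat set" where
  "fv (Pred P ts) = (\<Union>t\<in>set ts. tvars t)"
| "fv (Imp a b) = fv a \<union> fv b"
| "fv (SConj a b) = fv a \<union> fv b"
| "fv Zero = {}"
| "fv (All x a) = fv a - {x}"
| "fv (Ex x a) = fv a - {x}"

definition sentence :: "('c, 'p) fm \<Rightarrow> bool" where
  "sentence a \<longleftrightarrow> fv a = {}"

fun tsubst :: "nat \<Rightarrow> 'c trm \<Rightarrow> 'c trm \<Rightarrow> 'c trm" where
  "tsubst x t (Var y) = (if y = x then t else Var y)"
| "tsubst x t (Cst c) = Cst c"

fun subst :: "nat \<Rightarrow> 'c trm \<Rightarrow> ('c, 'p) fm \<Rightarrow> ('c, 'p) fm" where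
  "subst x t (Pred P ts) = Pred P (map (tsubst x t) ts)"
| "subst x t (Imp a b) = Imp (subst x t a) (subst x t b)"
| "subst x t (SConj a b) = SConj (subst x t a) (subst x t b)"
| "subst x t Zero = Zero"
| "subst x t (All y a) = (if y = x then All y a else All y (subst x t a))"
| "subst x t (Ex y a) = (if y = x then Ex y a else Ex y (subst x t a))"

fun substable :: "nat \<Rightarrow> 'c trm \<Rightarrow> ('c, 'p) fm \<Rightarrow> bool" where
  "substable x t (Pred P ts) = True"
| "substable x t (Imp a b) = (substable x t a \<and> substable x t b)"
| "substable x t (SConj a b) = (substable x t a \<and> substable x t b)"
| "substable x t Zero = True"
| "substable x t (All y a) =
     (x \<notin> fv (All y a) \<or> (y \<notin> tvars t \<and> substable x t a))"
| "substable x t (Ex y a) =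
     (x \<notin> fv (Ex y a) \<or> (y \<notin> tvars t \<and> substable x t a))"

definition WConj :: "('c, 'p) fm \<Rightarrow> ('c, 'p) fm \<Rightarrow> ('c, 'p) fm" where
  "WConj a b = SConj a (Imp a b)"

definition Disj :: "('c, 'p) fm \<Rightarrow> ('c, 'p) fm \<Rightarrow> ('c, 'p) fm" where
  "Disj a b = WConj (Imp (Imp a b) b) (Imp (Imp b a) a)"

definition Neg :: "('c, 'p) fm \<Rightarrow> ('c, 'p) fm" where
  "Neg a = Imp a Zero"

definition One :: "('c, 'p) fm" where
  "One = Imp Zero Zero"

text \<open>fpow b n = b & ... & b with n factors (meaningful for n >= 1; fpow b 0 = 1).\<close>
fun fpow :: "('c, 'p) fm \<Rightarrow> nat \<Rightarrow> ('c, 'p) fm" where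
  "fpow b 0 = One"
| "fpow b (Suc 0) = b"
| "fpow b (Suc (Suc n)) = SConj b (fpow b (Suc n))"

inductive bl_axiom :: "('c, 'p) fm \<Rightarrow> bool" where
  A1: "bl_axiom (Imp (Imp a b) (Imp (Imp b c) (Imp a c)))"
| A2: "bl_axiom (Imp (SConj a b) a)"
| A3: "bl_axiom (Imp (SConj a b) (SConj b a))"
| A4: "bl_axiom (Imp (SConj a (Imp a b)) (SConj b (Imp b a)))"
| A5: "bl_axiom (Imp (Imp a (Imp b c)) (Imp (SConj a b) c))"
| A6: "bl_axiom (Imp (Imp (SConj a b) c) (Imp a (Imp b c)))"
| A7: "bl_axiom (Imp (Imp (Imp a b) c) (Imp (Imp (Imp b a) c) c))"
| A8: "bl_axiom (Imp Zero a)"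
| All1: "substable x t a \<Longrightarrow> bl_axiom (Imp (All x a) (subst x t a))"
| Ex1: "substable x t a \<Longrightarrow> bl_axiom (Imp (subst x t a) (Ex x a))"
| All2: "x \<notin> fv a \<Longrightarrow> bl_axiom (Imp (All x (Imp a b)) (Imp a (All x b)))"
| Ex2: "x \<notin> fv a \<Longrightarrow> bl_axiom (Imp (All x (Imp b a)) (Imp (Ex x b) a))"
| Lin: "x \<notin> fv a \<Longrightarrow> bl_axiom (Imp (All x (Disj b a)) (Disj (All x b) a))"

definition rc_axiom :: "('c, 'p) fm \<Rightarrow> bool" where
  "rc_axiom a \<longleftrightarrow> (\<exists>x c. a = Imp (All x (SConj c c)) (SConj (All x c) (All x c)))"

text \<open>A proof from G is a family of formulas f indexed by the field of a well-order r
  that has a greatest element (an ordinal segment {i. i \<le> xi}); every formula is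
  (well-formed and) an axiom, an (RC) instance, a member of G, or follows from strictly
  earlier formulas by modus ponens, generalization or (Inf).\<close>

definition before :: "'i rel \<Rightarrow> 'i \<Rightarrow> 'i \<Rightarrow> bool" where
  "before r j i \<longleftrightarrow> (j, i) \<in> r \<and> j \<noteq> i"

definition justified ::
  "('c, 'p) fm set \<Rightarrow> 'i rel \<Rightarrow> ('i \<Rightarrow> ('c, 'p) fm) \<Rightarrow> 'i \<Rightarrow> bool" where
  "justified G r f i \<longleftrightarrow>
     bl_axiom (f i) \<or> rc_axiom (f i) \<or> f i \<in> G
   \<or> (\<exists>j k. before r j i \<and> before r k i \<and> f k = Imp (f j) (f i))
   \<or> (\<exists>j x. before r j i \<and> f i = All x (f j))
   \<or> (\<exists>a b c. sentence a \<and> sentence b \<and> sentence c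
        \<and> f i = Disj a (Imp b (SConj b c))
        \<and> (\<forall>n\<ge>1. \<exists>j. before r j i \<and> f j = Disj a (Imp b (fpow c n))))"

definition is_proof ::
  "('p \<Rightarrow> nat) \<Rightarrow> ('c, 'p) fm set \<Rightarrow> 'i rel \<Rightarrow> ('i \<Rightarrow> ('c, 'p) fm) \<Rightarrow> ('c, 'p) fm \<Rightarrow> bool" where
  "is_proof ar G r f a \<longleftrightarrow>
     Well_order r \<and>
     (\<exists>l\<in>Field r. (\<forall>i\<in>Field r. (i, l) \<in> r) \<and> f l = a) \<and>
     (\<forall>i\<in>Field r. wff ar (f i) \<and> justified G r f i)"

definition provable ::
  "'i itself \<Rightarrow> ('p \<Rightarrow> nat) \<Rightarrow> ('c, 'p) fm set \<Rightarrow> ('c, 'p) fm \<Rightarrow> bool" where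
  "provable _ ar G a \<longleftrightarrow> (\<exists>(r :: 'i rel) f. is_proof ar G r f a)"

definition cont_tnorm :: "(real \<Rightarrow> real \<Rightarrow> real) \<Rightarrow> bool" where
  "cont_tnorm T \<longleftrightarrow>
     (\<forall>x\<in>{0..1}. \<forall>y\<in>{0..1}. T x y \<in> {0..1})
   \<and> (\<forall>x\<in>{0..1}. \<forall>y\<in>{0..1}. T x y = T y x)
   \<and> (\<forall>x\<in>{0..1}. \<forall>y\<in>{0..1}. \<forall>z\<in>{0..1}. T (T x y) z = T x (T y z))
   \<and> (\<forall>x\<in>{0..1}. \<forall>y\<in>{0..1}. \<forall>z\<in>{0..1}. x \<le> y \<longrightarrow> T x z \<le> T y z)
   \<and> (\<forall>x\<in>{0..1}. T x 1 = x)
   \<and> continuous_on ({0..1} \<times> {0..1}) (\<lambda>(x, y). T x y)"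

definition residuum :: "(real \<Rightarrow> real \<Rightarrow> real) \<Rightarrow> real \<Rightarrow> real \<Rightarrow> real" where
  "residuum T x y = Sup {z \<in> {0..1}. T z x \<le> y}"

text \<open>A structure with universe the type 'a (nonempty by construction).\<close>
datatype ('a, 'c, 'p) struc = Struc (cint: "'c \<Rightarrow> 'a") (pint: "'p \<Rightarrow> 'a list \<Rightarrow> real")

definition is_struc :: "('p \<Rightarrow> nat) \<Rightarrow> ('a, 'c, 'p) struc \<Rightarrow> bool" where
  "is_struc ar M \<longleftrightarrow> (\<forall>P xs. length xs = ar P \<longrightarrow> pint M P xs \<in> {0..1})"

fun teval :: "('a, 'c, 'p) struc \<Rightarrow> (nat \<Rightarrow> 'a) \<Rightarrow> 'c trm \<Rightarrow> 'a" where
  "teval M v (Var x) = v x"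
| "teval M v (Cst c) = cint M c"

fun eval :: "(real \<Rightarrow> real \<Rightarrow> real) \<Rightarrow> ('a, 'c, 'p) struc \<Rightarrow> (nat \<Rightarrow> 'a)
               \<Rightarrow> ('c, 'p) fm \<Rightarrow> real" where
  "eval T M v (Pred P ts) = pint M P (map (teval M v) ts)"
| "eval T M v (Imp a b) = residuum T (eval T M v a) (eval T M v b)"
| "eval T M v (SConj a b) = T (eval T M v a) (eval T M v b)"
| "eval T M v Zero = 0"
| "eval T M v (All x a) = Inf ((\<lambda>d. eval T M (v(x := d)) a) ` UNIV)"
| "eval T M v (Ex x a) = Sup ((\<lambda>d. eval T M (v(x := d)) a) ` UNIV)"

definition is_model :: "(real \<Rightarrow> real \<Rightarrow> real) \<Rightarrow> ('a, 'c, 'p) struc \<Rightarrow> ('c, 'p) fm \<Rightarrow> bool" where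
  "is_model T M a \<longleftrightarrow> (\<forall>v. eval T M v a = 1)"

text \<open>G \<Turnstile> a, for structures whose universe is (in bijection with) the type 'a.\<close>
definition sem_conseq ::
  "'a itself \<Rightarrow> ('p \<Rightarrow> nat) \<Rightarrow> ('c, 'p) fm set \<Rightarrow> ('c, 'p) fm \<Rightarrow> bool" where
  "sem_conseq _ ar G a \<longleftrightarrow>
     (\<forall>T (M :: ('a, 'c, 'p) struc). cont_tnorm T \<longrightarrow> is_struc ar M \<longrightarrow>
        (\<forall>g\<in>G. is_model T M g) \<longrightarrow> is_model T M a)"

end

theory Submission imports Defs "HOL-Analysis.Analysis" begin

lemma teval_cong: "(\<forall>z\<in>tvars t. v z = w z) \<Longrightarrow> teval M v t = teval M w t"
  by (cases t) auto

lemma eval_cong: "(\<forall>z\<in>fv a. v z = w z) \<Longrightarrow> eval T M v a = eval T M w a"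
proof (induction a arbitrary: v w)
  case (Pred P ts)
  then have "map (teval M v) ts = map (teval M w) ts"
    by (auto intro!: teval_cong)
  then show ?case by (simp only: eval.simps)
next
  case (Imp a b)
  have "eval T M v a = eval T M w a" using Imp.prems by (auto intro!: Imp.IH)
  moreover have "eval T M v b = eval T M w b" using Imp.prems by (auto intro!: Imp.IH)
  ultimately show ?case by simp
next
  case (SConj a b)
  have "eval T M v a = eval T M w a" using SConj.prems by (auto intro!: SConj.IH)
  moreover have "eval T M v b = eval T M w b" using SConj.prems by (auto intro!: SConj.IH)
  ultimately show ?case by simp
next
  case (All x a)
  have "eval T M (v(x := d)) a = eval T M (w(x := d)) a" for d
    using All by (intro All.IH) auto
  then show ?case by simp
next
  case (Ex x a)
  have "eval T M (v(x := d)) a = eval T M (w(x := d)) a" for d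
    using Ex by (intro Ex.IH) auto
  then show ?case by simp
qed auto

lemma tsubst_nofv: "x \<notin> tvars s \<Longrightarrow> tsubst x t s = s"
  by (cases s) auto

lemma subst_nofv: "x \<notin> fv a \<Longrightarrow> subst x t a = a"
proof (induction a)
  case (Pred P ts)
  then show ?case by (auto intro!: map_idI tsubst_nofv)
qed auto

lemma wff_subst: "wff ar (subst x t a) = wff ar a"
  by (induction a) auto

lemma teval_subst: "teval M v (tsubst x t s) = teval M (v(x := teval M v t)) s"
  by (cases s) auto

lemma subst_lemma:
  "substable x t a \<Longrightarrow> eval T M v (subst x t a) = eval T M (v(x := teval M v t)) a"
proof (induction a arbitrary: v)
  case (Pred P ts)
  then show ?case by (simp add: teval_subst comp_def fun_upd_def)
next
  case (All y b)
  show ?case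
  proof (cases "y = x")
    case True
    then show ?thesis by (simp add: fun_upd_def cong: if_cong)
  next
    case False
    show ?thesis
    proof (cases "x \<in> fv (All y b)")
      case nf: False
      then have e1: "subst x t (All y b) = All y b" by (rule subst_nofv)
      have "eval T M v (All y b) = eval T M (v(x := teval M v t)) (All y b)"
        by (rule eval_cong) (use nf in auto)
      then show ?thesis by (simp only: e1)
    next
      case True
      with All.prems False have yt: "y \<notin> tvars t" and sb: "substable x t b" by auto
      have "eval T M (v(y := d)) (subst x t b) = eval T M (v(x := teval M v t, y := d)) b" for d
      proof -
        have h1: "teval M (v(y := d)) t = teval M v t" using yt by (intro teval_cong) auto
        have h2: "v(y := d, x := teval M v t) = v(x := teval M v t, y := d)"
          using False by (auto simp: fun_upd_twist)
        have "eval T M (v(y := d)) (subst x t b) = eval T M (v(y := d, x := teval M (v(y := d)) t)) b"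
          by (rule All.IH[OF sb])
        also have "\<dots> = eval T M (v(x := teval M v t, y := d)) b" by (simp only: h1 h2)
        finally show ?thesis .
      qed
      then have "eval T M v (All y (subst x t b)) = eval T M (v(x := teval M v t)) (All y b)"
        by (simp only: eval.simps)
      then show ?thesis using False by (simp only: subst.simps if_not_P[OF False] if_False)
    qed
  qed
next
  case (Ex y b)
  show ?case
  proof (cases "y = x")
    case True
    then show ?thesis by (simp add: fun_upd_def cong: if_cong)
  next
    case False
    show ?thesis
    proof (cases "x \<in> fv (Ex y b)")
      case nf: False
      then have e1: "subst x t (Ex y b) = Ex y b" by (rule subst_nofv)
      have "eval T M v (Ex y b) = eval T M (v(x := teval M v t)) (Ex y b)"
        by (rule eval_cong) (use nf in auto)
      then show ?thesis by (simp only: e1)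
    next
      case True
      with Ex.prems False have yt: "y \<notin> tvars t" and sb: "substable x t b" by auto
      have "eval T M (v(y := d)) (subst x t b) = eval T M (v(x := teval M v t, y := d)) b" for d
      proof -
        have h1: "teval M (v(y := d)) t = teval M v t" using yt by (intro teval_cong) auto
        have h2: "v(y := d, x := teval M v t) = v(x := teval M v t, y := d)"
          using False by (auto simp: fun_upd_twist)
        have "eval T M (v(y := d)) (subst x t b) = eval T M (v(y := d, x := teval M (v(y := d)) t)) b"
          by (rule Ex.IH[OF sb])
        also have "\<dots> = eval T M (v(x := teval M v t, y := d)) b" by (simp only: h1 h2)
        finally show ?thesis .
      qed
      then have "eval T M v (Ex y (subst x t b)) = eval T M (v(x := teval M v t)) (Ex y b)"
        by (simp only: eval.simps)
      then show ?thesis using False by (simp only: subst.simps if_not_P[OF False] if_False)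
    qed
  qed
qed auto

primrec tpow :: "(real \<Rightarrow> real \<Rightarrow> real) \<Rightarrow> real \<Rightarrow> nat \<Rightarrow> real" where
  "tpow T y 0 = 1"
| "tpow T y (Suc n) = T y (tpow T y n)"

locale tn =
  fixes T :: "real \<Rightarrow> real \<Rightarrow> real"
  assumes ct: "cont_tnorm T"
begin

lemma T_range: "x \<in> {0..1} \<Longrightarrow> y \<in> {0..1} \<Longrightarrow> T x y \<in> {0..1}"
  using ct unfolding cont_tnorm_def by blast
lemma T_comm: "x \<in> {0..1} \<Longrightarrow> y \<in> {0..1} \<Longrightarrow> T x y = T y x"
  using ct unfolding cont_tnorm_def by blast
lemma T_assoc: "x \<in> {0..1} \<Longrightarrow> y \<in> {0..1} \<Longrightarrow> z \<in> {0..1} \<Longrightarrow> T (T x y) z = T x (T y z)"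
  using ct unfolding cont_tnorm_def by blast
lemma T_mono1: "x \<in> {0..1} \<Longrightarrow> y \<in> {0..1} \<Longrightarrow> z \<in> {0..1} \<Longrightarrow> x \<le> y \<Longrightarrow> T x z \<le> T y z"
  using ct unfolding cont_tnorm_def by blast
lemma T_mono2: "x \<in> {0..1} \<Longrightarrow> y \<in> {0..1} \<Longrightarrow> z \<in> {0..1} \<Longrightarrow> x \<le> y \<Longrightarrow> T z x \<le> T z y"
  using T_mono1 T_comm by metis
lemma T_mono: "x \<in> {0..1} \<Longrightarrow> y \<in> {0..1} \<Longrightarrow> x' \<in> {0..1} \<Longrightarrow> y' \<in> {0..1} \<Longrightarrow> x \<le> x' \<Longrightarrow> y \<le> y' \<Longrightarrow> T x y \<le> T x' y'"
  by (meson T_mono1 T_mono2 order_trans)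
lemma T_one: "x \<in> {0..1} \<Longrightarrow> T x 1 = x"
  using ct unfolding cont_tnorm_def by blast
lemma T_one': "x \<in> {0..1} \<Longrightarrow> T 1 x = x"
  using T_one T_comm by fastforce
lemma T_le1: "x \<in> {0..1} \<Longrightarrow> y \<in> {0..1} \<Longrightarrow> T x y \<le> x"
  using T_mono2[of y 1 x] T_one by auto
lemma T_le2: "x \<in> {0..1} \<Longrightarrow> y \<in> {0..1} \<Longrightarrow> T x y \<le> y"
  using T_le1 T_comm by metis
lemma T_zero: "x \<in> {0..1} \<Longrightarrow> T 0 x = 0"
  using T_le1[of 0 x] T_range[of 0 x] by auto
lemma T_cont: "continuous_on ({0..1} \<times> {0..1}) (\<lambda>(x, y). T x y)"
  using ct unfolding cont_tnorm_def by blast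
lemma cont1: "y \<in> {0..1} \<Longrightarrow> continuous_on {0..1} (\<lambda>z. T z y)"
proof -
  assume "y \<in> {0..1}"
  have "continuous_on {0..1} (\<lambda>z. (\<lambda>(x, y). T x y) (z,y))"
    by (rule continuous_on_compose2[OF T_cont]) (use \<open>y \<in> {0..1}\<close> in \<open>auto intro!: continuous_intros\<close>)
  then show ?thesis by simp
qed
lemma cont2: "y \<in> {0..1} \<Longrightarrow> continuous_on {0..1} (\<lambda>z. T y z)"
proof -
  assume "y \<in> {0..1}"
  have "continuous_on {0..1} (\<lambda>z. (\<lambda>(x, y). T x y) (y,z))"
    by (rule continuous_on_compose2[OF T_cont]) (use \<open>y \<in> {0..1}\<close> in \<open>auto intro!: continuous_intros\<close>)
  then show ?thesis by simp
qed
lemma contd: "continuous_on {0..1} (\<lambda>z. T z z)"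
proof -
  have "continuous_on {0..1} (\<lambda>z. (\<lambda>(x, y). T x y) (z,z))"
    by (rule continuous_on_compose2[OF T_cont]) (auto intro!: continuous_intros)
  then show ?thesis by simp
qed

lemma res_sup:
  assumes x: "x \<in> {0..1}" and y: "y \<in> {0..1}"
  shows "residuum T x y \<in> {z \<in> {0..1}. T z x \<le> y}"
proof -
  let ?S = "{z \<in> {0..1}. T z x \<le> y}"
  have eq: "?S = {0..1} \<inter> (\<lambda>z. T z x) -` {..y}" by auto
  have "closed ?S" unfolding eq
    by (rule continuous_closed_preimage[OF cont1[OF x]]) auto
  moreover have "0 \<in> ?S" using T_zero x y by auto
  moreover have "bdd_above ?S" by (auto intro!: bdd_aboveI[of _ 1])
  ultimately show ?thesis unfolding residuum_def
    using closed_contains_Sup[of ?S] by blast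
qed

lemma res_range: "x \<in> {0..1} \<Longrightarrow> y \<in> {0..1} \<Longrightarrow> residuum T x y \<in> {0..1}"
  using res_sup by blast

lemma adj:
  assumes x: "x \<in> {0..1}" and y: "y \<in> {0..1}" and z: "z \<in> {0..1}"
  shows "T z x \<le> y \<longleftrightarrow> z \<le> residuum T x y"
proof
  assume "T z x \<le> y"
  then show "z \<le> residuum T x y" unfolding residuum_def
    using z by (intro cSup_upper) (auto intro!: bdd_aboveI[of _ 1])
next
  assume "z \<le> residuum T x y"
  then have "T z x \<le> T (residuum T x y) x"
    using T_mono1 x z res_range[OF x y] by blast
  also have "\<dots> \<le> y" using res_sup[OF x y] by auto
  finally show "T z x \<le> y" .
qed

lemma res_one: "x \<in> {0..1} \<Longrightarrow> y \<in> {0..1} \<Longrightarrow> residuum T x y = 1 \<longleftrightarrow> x \<le> y"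
  using adj[of x y 1] T_one' res_range[of x y] by auto

lemma res_1: "y \<in> {0..1} \<Longrightarrow> residuum T 1 y = y"
  using adj[of 1 y y] adj[of 1 y "residuum T 1 y"] res_range[of 1 y] T_one
  by (metis atLeastAtMost_iff order_antisym order_refl zero_le_one)

lemma ge_res: "x \<in> {0..1} \<Longrightarrow> y \<in> {0..1} \<Longrightarrow> y \<le> residuum T x y"
  using adj[of x y y] T_le1 by auto

lemma div_ex:
  assumes x: "x \<in> {0..1}" and y: "y \<in> {0..1}" and le: "y \<le> x"
  shows "\<exists>z\<in>{0..1}. T x z = y"
proof -
  have "T x 0 = 0" using T_comm[of x 0] T_zero[OF x] x by simp
  then have "T x 0 \<le> y" using y by simp
  moreover have "y \<le> T x 1" using T_one x le by auto
  ultimately show ?thesis using IVT'[of "\<lambda>z. T x z" 0 y 1] cont2[OF x] by auto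
qed

lemma divis:
  assumes x: "x \<in> {0..1}" and y: "y \<in> {0..1}"
  shows "T x (residuum T x y) = min x y"
proof (cases "x \<le> y")
  case True
  then show ?thesis using res_one[OF x y] T_one[OF x] by simp
next
  case False
  then obtain z where z: "z \<in> {0..1}" "T x z = y" using div_ex x y by force
  have "T z x \<le> y" using z T_comm x by auto
  then have "z \<le> residuum T x y" using adj x y z by auto
  then have "y \<le> T x (residuum T x y)" using T_mono2 z x res_range[OF x y] by metis
  moreover have "T x (residuum T x y) \<le> y"
    using adj[OF x y res_range[OF x y]] T_comm[OF x res_range[OF x y]] by auto
  ultimately show ?thesis using False by auto
qed


lemma tpow_range: "y \<in> {0..1} \<Longrightarrow> tpow T y n \<in> {0..1}"
proof (induction n)
  case (Suc n) then show ?case using T_range[of y "tpow T y n"] by simp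
qed simp

lemma tpow_add: "y \<in> {0..1} \<Longrightarrow> tpow T y (m + n) = T (tpow T y m) (tpow T y n)"
proof (induction m)
  case 0 then show ?case using T_one' tpow_range by simp
next
  case (Suc m) then show ?case using T_assoc tpow_range by simp
qed

lemma inf_rule:
  assumes x: "x \<in> {0..1}" and y: "y \<in> {0..1}" and h: "\<forall>n\<ge>1. x \<le> tpow T y n"
  shows "x \<le> T x y"
proof -
  have "decseq (tpow T y)" unfolding decseq_Suc_iff
    using T_le2 tpow_range y by simp
  moreover have "\<forall>i. 0 \<le> tpow T y i" using tpow_range y by auto
  ultimately obtain e where lim: "tpow T y \<longlonglongrightarrow> e" and le: "\<forall>i. e \<le> tpow T y i"
    using decseq_convergent by blast
  have e0: "0 \<le> e" using LIMSEQ_le_const[OF lim] tpow_range[OF y] by auto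
  have e1: "e \<le> y" using le[rule_format, of 1] T_one y by simp
  have eI: "e \<in> {0..1}" using e0 e1 y by auto
  have "strict_mono (\<lambda>n::nat. n + n)" by (auto simp: strict_mono_def)
  from LIMSEQ_subseq_LIMSEQ[OF lim this]
  have l2: "(\<lambda>n. tpow T y (n + n)) \<longlonglongrightarrow> e" by (simp add: o_def)
  have l3: "(\<lambda>n. T (tpow T y n) (tpow T y n)) \<longlonglongrightarrow> T e e"
    using continuous_on_tendsto_compose[OF contd lim eI] tpow_range[OF y] by simp
  have "(\<lambda>n. tpow T y (n + n)) = (\<lambda>n. T (tpow T y n) (tpow T y n))"
    using tpow_add[OF y] by simp
  with l2 l3 have ee: "T e e = e" using LIMSEQ_unique by metis
  have xe: "x \<le> e" using LIMSEQ_le_const[OF lim, of x] h by auto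
  obtain z where z: "z \<in> {0..1}" "T e z = x" using div_ex[OF eI x xe] by blast
  have "T x e = T (T e z) e" using z by simp
  also have "\<dots> = T e (T e z)" using T_assoc T_comm z eI by metis
  also have "\<dots> = T (T e e) z" using T_assoc z eI by metis
  also have "\<dots> = x" using ee z by simp
  finally have "T x e = x" .
  moreover have "T x e \<le> T x y" using T_mono2 eI y x e1 by blast
  ultimately show ?thesis by simp
qed

lemma rc_lemma:
  fixes c :: "'a \<Rightarrow> real"
  assumes c: "\<And>d. c d \<in> {0..1}"
  shows "(INF d. T (c d) (c d)) \<le> T (INF d. c d) (INF d. c d)"
proof -
  define m where "m = (INF d. c d)"
  have bdd: "bdd_below (range c)" using c by (auto intro!: bdd_belowI[of _ 0])
  have bdd2: "bdd_below (range (\<lambda>d. T (c d) (c d)))" using c T_range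
    by (auto intro!: bdd_belowI[of _ 0])
  have mle: "m \<le> c d" for d unfolding m_def using cINF_lower[OF bdd] by simp
  have m0: "0 \<le> m" unfolding m_def using c by (auto intro!: cINF_greatest)
  obtain d0 :: 'a where True by simp
  have m1: "m \<le> 1" using mle[of d0] c[of d0] by simp
  have "\<forall>n. \<exists>d. c d < m + inverse (real (Suc n))"
  proof
    fix n
    have "(INF d. c d) < m + inverse (real (Suc n))" unfolding m_def[symmetric] by simp
    then show "\<exists>d. c d < m + inverse (real (Suc n))"
      by (simp add: cINF_less_iff[OF UNIV_not_empty bdd])
  qed
  then obtain s where s: "\<And>n. c (s n) < m + inverse (real (Suc n))" by metis
  have "(\<lambda>n. m + inverse (real (Suc n))) \<longlonglongrightarrow> m + 0"
    by (intro tendsto_add tendsto_const LIMSEQ_inverse_real_of_nat)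
  then have up: "(\<lambda>n. m + inverse (real (Suc n))) \<longlonglongrightarrow> m" by simp
  have e1: "eventually (\<lambda>n. m \<le> c (s n)) sequentially"
    using mle by (intro always_eventually) blast
  have e2: "eventually (\<lambda>n. c (s n) \<le> m + inverse (real (Suc n))) sequentially"
    using s by (intro always_eventually allI less_imp_le)
  have lim: "(\<lambda>n. c (s n)) \<longlonglongrightarrow> m"
    by (rule tendsto_sandwich[OF e1 e2 tendsto_const up])
  have l2: "(\<lambda>n. T (c (s n)) (c (s n))) \<longlonglongrightarrow> T m m"
    using continuous_on_tendsto_compose[OF contd lim] m0 m1 c by simp
  show ?thesis unfolding m_def[symmetric]
  proof (rule LIMSEQ_le_const[OF l2])
    show "\<exists>N. \<forall>n\<ge>N. (INF d. T (c d) (c d)) \<le> T (c (s n)) (c (s n))"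
      using cINF_lower[OF bdd2] by blast
  qed
qed


lemma eval_range: "is_struc ar M \<Longrightarrow> wff ar a \<Longrightarrow> eval T M v a \<in> {0..1}"
proof (induction a arbitrary: v)
  case (Pred P ts)
  then show ?case unfolding is_struc_def by simp
next
  case (Imp a b) then show ?case using res_range by simp
next
  case (SConj a b) then show ?case using T_range by simp
next
  case (All x a)
  have r: "eval T M (v(x := d)) a \<in> {0..1}" for d using All by simp
  have "0 \<le> (INF d. eval T M (v(x := d)) a)" using r by (auto intro!: cINF_greatest)
  moreover have "(INF d. eval T M (v(x := d)) a) \<le> 1"
    using r by (intro cINF_lower2[of _ _ undefined]) (auto intro!: bdd_belowI[of _ 0])
  ultimately show ?case by simp
next
  case (Ex x a)
  have r: "eval T M (v(x := d)) a \<in> {0..1}" for d using Ex by simp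
  have "(SUP d. eval T M (v(x := d)) a) \<le> 1" using r by (auto intro!: cSUP_least)
  moreover have "0 \<le> (SUP d. eval T M (v(x := d)) a)"
    using r by (intro cSUP_upper2[of _ _ undefined]) (auto intro!: bdd_aboveI[of _ 1])
  ultimately show ?case by simp
qed simp


lemma mp_le: "p \<in> {0..1} \<Longrightarrow> q \<in> {0..1} \<Longrightarrow> T (residuum T p q) p \<le> q"
  using adj[of p q "residuum T p q"] res_range by auto

lemma a1: assumes p: "p \<in> {0..1}" and q: "q \<in> {0..1}" and r: "r \<in> {0..1}"
  shows "residuum T p q \<le> residuum T (residuum T q r) (residuum T p r)"
proof -
  let ?u = "residuum T p q" and ?w = "residuum T q r"
  have u: "?u \<in> {0..1}" and w: "?w \<in> {0..1}" using res_range p q r by auto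
  have "T (T ?u ?w) p = T ?w (T ?u p)" using T_assoc T_comm u w p by metis
  also have "\<dots> \<le> T ?w q" using T_mono2[OF T_range[OF u p] q w] mp_le[OF p q] by simp
  also have "\<dots> \<le> r" using mp_le[OF q r] by simp
  finally have "T (T ?u ?w) p \<le> r" .
  then have "T ?u ?w \<le> residuum T p r" using adj[OF p r T_range[OF u w]] by simp
  then show ?thesis using adj[OF w res_range[OF p r] u] by simp
qed

lemma a5: assumes p: "p \<in> {0..1}" and q: "q \<in> {0..1}" and r: "r \<in> {0..1}"
  shows "residuum T p (residuum T q r) \<le> residuum T (T p q) r"
proof -
  let ?u = "residuum T p (residuum T q r)"
  have w: "residuum T q r \<in> {0..1}" using res_range q r by auto
  have u: "?u \<in> {0..1}" using res_range p w by auto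
  have "T ?u p \<le> residuum T q r" using adj[OF p w u] by simp
  then have "T (T ?u p) q \<le> r" using adj[OF q r T_range[OF u p]] by simp
  then have "T ?u (T p q) \<le> r" using T_assoc u p q by simp
  then show ?thesis using adj[OF T_range[OF p q] r u] by simp
qed

lemma a6: assumes p: "p \<in> {0..1}" and q: "q \<in> {0..1}" and r: "r \<in> {0..1}"
  shows "residuum T (T p q) r \<le> residuum T p (residuum T q r)"
proof -
  let ?u = "residuum T (T p q) r"
  have u: "?u \<in> {0..1}" using res_range T_range p q r by auto
  have "T ?u (T p q) \<le> r" using adj[OF T_range[OF p q] r u] by simp
  then have "T (T ?u p) q \<le> r" using T_assoc u p q by simp
  then have "T ?u p \<le> residuum T q r" using adj[OF q r T_range[OF u p]] by simp
  then show ?thesis using adj[OF p res_range[OF q r] u] by simp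
qed

lemma a7: assumes p: "p \<in> {0..1}" and q: "q \<in> {0..1}" and r: "r \<in> {0..1}"
  shows "residuum T (residuum T p q) r \<le> residuum T (residuum T (residuum T q p) r) r"
proof -
  let ?u = "residuum T (residuum T p q) r" and ?w = "residuum T (residuum T q p) r"
  have u: "?u \<in> {0..1}" and w: "?w \<in> {0..1}" using res_range p q r by auto
  have "T ?u ?w \<le> r"
  proof (cases "p \<le> q")
    case True
    then have "?u = r" using res_one[OF p q] res_1[OF r] by simp
    then show ?thesis using T_le1[OF r w] by simp
  next
    case False
    then have "?w = r" using res_one[OF q p] res_1[OF r] by simp
    then show ?thesis using T_le2[OF u r] by simp
  qed
  then show ?thesis using adj[OF w r u] by simp
qed

lemma max_lemma: assumes p: "p \<in> {0..1}" and q: "q \<in> {0..1}"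
  shows "min (residuum T (residuum T p q) q) (residuum T (residuum T q p) p) = max p q"
proof -
  have ge: "b \<le> residuum T (residuum T b a) a" if a: "a \<in> {0..1}" and b: "b \<in> {0..1}" for a b
  proof -
    have "T b (residuum T b a) \<le> a" using divis[OF b a] by simp
    then show ?thesis using adj[OF res_range[OF b a] a b] by simp
  qed
  show ?thesis
  proof (cases "p \<le> q")
    case True
    then have "residuum T (residuum T p q) q = q" using res_one[OF p q] res_1[OF q] by simp
    moreover have "residuum T (residuum T q p) p \<le> 1" using res_range res_range p q by auto
    ultimately show ?thesis using ge[OF p q] True by simp
  next
    case False
    then have "residuum T (residuum T q p) p = p" using res_one[OF q p] res_1[OF p] by simp
    moreover have "residuum T (residuum T p q) q \<le> 1" using res_range res_range p q by auto
    ultimately show ?thesis using ge[OF q p] False by simp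
  qed
qed

context
  fixes ar and M :: "('a, 'c, 'p) struc"
  assumes st: "is_struc ar M"
begin

abbreviation E where "E v a \<equiv> eval T M v a"

lemma rg: "wff ar a \<Longrightarrow> E v a \<in> {0..1}"
  using eval_range[OF st] by blast

lemma eval_Disj: "wff ar a \<Longrightarrow> wff ar b \<Longrightarrow> E v (Disj a b) = max (E v a) (E v b)"
  unfolding Disj_def WConj_def
  using divis[OF res_range[OF res_range[OF rg rg] rg] res_range[OF res_range[OF rg rg] rg]]
    max_lemma[OF rg rg] by simp

lemma eval_fpow: "E v c \<in> {0..1} \<Longrightarrow> E v (fpow c n) = tpow T (E v c) n"
proof (induction c n rule: fpow.induct)
  case (1 b)
  then show ?case using res_one[of 0 0] by (simp add: One_def)
next
  case (2 b)
  then show ?case using T_one by simp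
next
  case (3 b n)
  then show ?case by simp
qed

lemma imp1: "wff ar a \<Longrightarrow> wff ar b \<Longrightarrow> E v (Imp a b) = 1 \<longleftrightarrow> E v a \<le> E v b"
  using res_one[OF rg rg] by simp


lemma bdd_E: "wff ar a \<Longrightarrow> bdd_below (range (\<lambda>d. E (v(x := d)) a))"
  "wff ar a \<Longrightarrow> bdd_above (range (\<lambda>d. E (v(x := d)) a))"
  using rg by (auto intro!: bdd_belowI[of _ 0] bdd_aboveI[of _ 1])

lemma impI': "wff ar (Imp X Y) \<Longrightarrow> E v X \<le> E v Y \<Longrightarrow> E v (Imp X Y) = 1"
  using imp1[of X Y v] by simp

lemma ax_sound: assumes w: "wff ar \<phi>" and ax: "bl_axiom \<phi>" shows "E v \<phi> = 1"
  using ax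
proof (cases rule: bl_axiom.cases)
  case (A1 a b c)
  then have wf: "wff ar a" "wff ar b" "wff ar c" using w by auto
  have "E v \<phi> = 1 \<longleftrightarrow> E v (Imp a b) \<le> E v (Imp (Imp b c) (Imp a c))"
    unfolding A1 by (rule imp1) (use wf in auto)
  then show ?thesis using a1[OF rg[OF wf(1)] rg[OF wf(2)] rg[OF wf(3)]] by simp
next
  case (A2 a b)
  then have wf: "wff ar a" "wff ar b" using w by auto
  show ?thesis unfolding A2 by (rule impI'[OF w[unfolded A2]]) (simp add: T_le1[OF rg[OF wf(1)] rg[OF wf(2)]])
next
  case (A3 a b)
  then have wf: "wff ar a" "wff ar b" using w by auto
  show ?thesis unfolding A3 by (rule impI'[OF w[unfolded A3]]) (simp add: T_comm[OF rg[OF wf(1)] rg[OF wf(2)]])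
next
  case (A4 a b)
  then have wf: "wff ar a" "wff ar b" using w by auto
  show ?thesis unfolding A4 by (rule impI'[OF w[unfolded A4]])
    (simp add: divis[OF rg[OF wf(1)] rg[OF wf(2)]] divis[OF rg[OF wf(2)] rg[OF wf(1)]] min.commute)
next
  case (A5 a b c)
  then have wf: "wff ar a" "wff ar b" "wff ar c" using w by auto
  show ?thesis unfolding A5 by (rule impI'[OF w[unfolded A5]]) (simp add: a5[OF rg[OF wf(1)] rg[OF wf(2)] rg[OF wf(3)]])
next
  case (A6 a b c)
  then have wf: "wff ar a" "wff ar b" "wff ar c" using w by auto
  show ?thesis unfolding A6 by (rule impI'[OF w[unfolded A6]]) (simp add: a6[OF rg[OF wf(1)] rg[OF wf(2)] rg[OF wf(3)]])
next
  case (A7 a b c)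
  then have wf: "wff ar a" "wff ar b" "wff ar c" using w by auto
  show ?thesis unfolding A7 by (rule impI'[OF w[unfolded A7]]) (simp add: a7[OF rg[OF wf(1)] rg[OF wf(2)] rg[OF wf(3)]])
next
  case (A8 a)
  then have wf: "wff ar a" using w by auto
  show ?thesis unfolding A8 by (rule impI'[OF w[unfolded A8]]) (use rg[OF wf] in simp)
next
  case (All1 x t a)
  then have wa: "wff ar a" using w by simp
  have "(INF d. E (v(x := d)) a) \<le> E (v(x := teval M v t)) a"
    by (rule cINF_lower[OF bdd_E(1)[OF wa]]) simp
  then show ?thesis unfolding All1 by (intro impI'[OF w[unfolded All1]]) (simp add: subst_lemma[OF All1(2)])
next
  case (Ex1 x t a)
  then have wa: "wff ar a" using w by simp
  have "E (v(x := teval M v t)) a \<le> (SUP d. E (v(x := d)) a)"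
    by (rule cSUP_upper[OF _ bdd_E(2)[OF wa]]) simp
  then show ?thesis unfolding Ex1 by (intro impI'[OF w[unfolded Ex1]]) (simp add: subst_lemma[OF Ex1(2)])
next
  case (All2 x a b)
  then have wa: "wff ar a" and wb: "wff ar b" using w by auto
  have ea: "E (v(x := d)) a = E v a" for d using All2 by (intro eval_cong) auto
  let ?z = "INF d. residuum T (E v a) (E (v(x := d)) b)"
  have zr: "?z \<in> {0..1}" using rg[of "All x (Imp a b)" v] w All2 ea by simp
  have bdz: "bdd_below (range (\<lambda>d. residuum T (E v a) (E (v(x := d)) b)))"
    using res_range[OF rg[OF wa] rg[OF wb]] by (auto intro!: bdd_belowI[of _ 0])
  have "T ?z (E v a) \<le> E (v(x := d)) b" for d
  proof -
    have "?z \<le> residuum T (E v a) (E (v(x := d)) b)" by (rule cINF_lower[OF bdz]) simp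
    then show ?thesis using adj[OF rg[OF wa] rg[OF wb] zr] by simp
  qed
  then have "T ?z (E v a) \<le> (INF d. E (v(x := d)) b)" by (intro cINF_greatest) auto
  then have "?z \<le> residuum T (E v a) (INF d. E (v(x := d)) b)"
    using adj[OF rg[OF wa] _ zr] rg[of "All x b" v] wb by simp
  then show ?thesis unfolding All2 by (intro impI'[OF w[unfolded All2]]) (simp add: ea)
next
  case (Ex2 x a b)
  then have wa: "wff ar a" and wb: "wff ar b" using w by auto
  have ea: "E (v(x := d)) a = E v a" for d using Ex2 by (intro eval_cong) auto
  let ?z = "INF d. residuum T (E (v(x := d)) b) (E v a)"
  have zr: "?z \<in> {0..1}" using rg[of "All x (Imp b a)" v] w Ex2 ea by simp
  have bdz: "bdd_below (range (\<lambda>d. residuum T (E (v(x := d)) b) (E v a)))"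
    using res_range[OF rg[OF wb] rg[OF wa]] by (auto intro!: bdd_belowI[of _ 0])
  have "E (v(x := d)) b \<le> residuum T ?z (E v a)" for d
  proof -
    have "?z \<le> residuum T (E (v(x := d)) b) (E v a)" by (rule cINF_lower[OF bdz]) simp
    then have "T ?z (E (v(x := d)) b) \<le> E v a" using adj[OF rg[OF wb] rg[OF wa] zr] by simp
    then have "T (E (v(x := d)) b) ?z \<le> E v a" using T_comm[OF zr rg[OF wb]] by simp
    then show ?thesis using adj[OF zr rg[OF wa] rg[OF wb]] by simp
  qed
  then have "(SUP d. E (v(x := d)) b) \<le> residuum T ?z (E v a)" by (intro cSUP_least) auto
  then have "T (SUP d. E (v(x := d)) b) ?z \<le> E v a"
    using adj[OF zr rg[OF wa], of "SUP d. E (v(x := d)) b"] rg[of "Ex x b" v] wb by simp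
  then have "T ?z (SUP d. E (v(x := d)) b) \<le> E v a"
    using T_comm[OF zr, of "SUP d. E (v(x := d)) b"] rg[of "Ex x b" v] wb by simp
  then have "?z \<le> residuum T (SUP d. E (v(x := d)) b) (E v a)"
    using adj[OF _ rg[OF wa] zr] rg[of "Ex x b" v] wb by simp
  then show ?thesis unfolding Ex2 by (intro impI'[OF w[unfolded Ex2]]) (simp add: ea)
next
  case (Lin x a b)
  then have wa: "wff ar a" and wb: "wff ar b" using w by (auto simp: Disj_def WConj_def)
  have ea: "E (v(x := d)) a = E v a" for d using Lin by (intro eval_cong) auto
  let ?L = "INF d. max (E (v(x := d)) b) (E v a)"
  have lhs: "E v (All x (Disj b a)) = ?L" using eval_Disj[OF wb wa] ea by simp
  have rhs: "E v (Disj (All x b) a) = max (INF d. E (v(x := d)) b) (E v a)"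
    using eval_Disj[of "All x b" a] wb wa by simp
  have bdL: "bdd_below (range (\<lambda>d. max (E (v(x := d)) b) (E v a)))"
    using rg[OF wa, of v] by (auto intro!: bdd_belowI[of _ 0] simp: le_max_iff_disj)
  have ineq: "?L \<le> max (INF d. E (v(x := d)) b) (E v a)"
  proof (cases "?L \<le> E v a")
    case True then show ?thesis by simp
  next
    case False
    have "?L \<le> E (v(x := d)) b" for d
    proof -
      have "?L \<le> max (E (v(x := d)) b) (E v a)" by (rule cINF_lower[OF bdL]) simp
      then show ?thesis using False by simp
    qed
    then have "?L \<le> (INF d. E (v(x := d)) b)" by (intro cINF_greatest) auto
    then show ?thesis by simp
  qed
  moreover have "wff ar (All x (Disj b a))" "wff ar (Disj (All x b) a)"
    using wa wb by (auto simp: Disj_def WConj_def)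
  then show ?thesis unfolding Lin by (intro impI'[OF w[unfolded Lin]]) (simp only: lhs rhs ineq)
qed

lemma rc_sound: assumes w: "wff ar \<phi>" and ax: "rc_axiom \<phi>" shows "E v \<phi> = 1"
proof -
  obtain x c where phi: "\<phi> = Imp (All x (SConj c c)) (SConj (All x c) (All x c))"
    using ax unfolding rc_axiom_def by blast
  then have wc: "wff ar c" using w by simp
  have "E v \<phi> = 1 \<longleftrightarrow> E v (All x (SConj c c)) \<le> E v (SConj (All x c) (All x c))"
    unfolding phi by (rule imp1) (use wc in auto)
  then show ?thesis using rc_lemma[of "\<lambda>d. E (v(x := d)) c"] rg[OF wc] by simp
qed


lemma wff_fpow: "wff ar c \<Longrightarrow> wff ar (fpow c n)"
  by (induction c n rule: fpow.induct) (auto simp: One_def)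

lemma inf_sound:
  assumes w: "wff ar (Disj a (Imp b (SConj b c)))"
    and h: "\<forall>n\<ge>1. E v (Disj a (Imp b (fpow c n))) = 1"
  shows "E v (Disj a (Imp b (SConj b c))) = 1"
proof -
  have wa: "wff ar a" and wb: "wff ar b" and wc: "wff ar c" using w by (auto simp: Disj_def WConj_def)
  have cI: "E v c \<in> {0..1}" using rg[OF wc] .
  have bI: "E v b \<in> {0..1}" using rg[OF wb] .
  have aI: "E v a \<in> {0..1}" using rg[OF wa] .
  have concl: "E v (Disj a (Imp b (SConj b c))) = max (E v a) (residuum T (E v b) (T (E v b) (E v c)))"
    using eval_Disj[OF wa, of "Imp b (SConj b c)"] wb wc by simp
  have rr: "residuum T (E v b) (T (E v b) (E v c)) \<in> {0..1}" using res_range[OF bI T_range[OF bI cI]] .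
  show ?thesis
  proof (cases "E v a = 1")
    case True then show ?thesis using concl rr by simp
  next
    case False
    have "E v b \<le> tpow T (E v c) n" if n: "n \<ge> 1" for n
    proof -
      have "E v (Disj a (Imp b (fpow c n))) = max (E v a) (residuum T (E v b) (tpow T (E v c) n))"
        using eval_Disj[OF wa, of "Imp b (fpow c n)"] wb wff_fpow[OF wc] eval_fpow[OF cI] by simp
      then have "max (E v a) (residuum T (E v b) (tpow T (E v c) n)) = 1" using h n by simp
      then have "residuum T (E v b) (tpow T (E v c) n) = 1" using False aI
        by (auto simp: max_def split: if_splits)
      then show ?thesis using res_one[OF bI tpow_range[OF cI]] by simp
    qed
    then have "E v b \<le> T (E v b) (E v c)" using inf_rule[OF bI cI] by blast
    then show ?thesis using concl res_one[OF bI T_range[OF bI cI]] aI by simp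
  qed
qed

end

end

theorem mainTheorem7:
  fixes ar :: "'p::countable \<Rightarrow> nat"
    and G :: "('c::countable, 'p) fm set"
    and a :: "('c, 'p) fm"
  assumes "\<forall>g\<in>G. wff ar g"
    and "provable TYPE('i) ar G a"
  shows "sem_conseq TYPE('a) ar G a"
proof -
  from assms(2) obtain r :: "'i rel" and f where pf: "is_proof ar G r f a"
    unfolding provable_def by blast
  have WO: "Well_order r" and last: "\<exists>l\<in>Field r. (\<forall>i\<in>Field r. (i, l) \<in> r) \<and> f l = a"
    and wj: "\<And>i. i \<in> Field r \<Longrightarrow> wff ar (f i) \<and> justified G r f i"
    using pf unfolding is_proof_def by auto
  have wf: "wf (r - Id)" using WO unfolding well_order_on_def by blast
  show ?thesis unfolding sem_conseq_def
  proof (intro allI impI)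
    fix T and M :: "('a, 'c, 'p) struc"
    assume ct: "cont_tnorm T" and st: "is_struc ar M" and mG: "\<forall>g\<in>G. is_model T M g"
    interpret tn T by (rule tn.intro[OF ct])
    have main: "i \<in> Field r \<Longrightarrow> eval T M v (f i) = 1" for i v
    proof (induction i arbitrary: v rule: wf_induct_rule[OF wf])
      case (1 i)
      have IH: "\<And>j v. before r j i \<Longrightarrow> eval T M v (f j) = 1"
        using 1 unfolding before_def by (auto intro: FieldI1)
      have wi: "wff ar (f i)" and ji: "justified G r f i" using wj[OF 1(2)] by auto
      have bF: "before r j i \<Longrightarrow> j \<in> Field r" for j unfolding before_def by (auto intro: FieldI1)
      show ?case using ji unfolding justified_def
      proof (elim disjE exE conjE)
        assume "bl_axiom (f i)" then show ?thesis using ax_sound[OF st wi] by blast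
      next
        assume "rc_axiom (f i)" then show ?thesis using rc_sound[OF st wi] by blast
      next
        assume "f i \<in> G" then show ?thesis using mG unfolding is_model_def by blast
      next
        fix j k assume bj: "before r j i" and bk: "before r k i" and fk: "f k = Imp (f j) (f i)"
        have "eval T M v (f k) = 1" using IH[OF bk] .
        moreover have "eval T M v (f j) = 1" using IH[OF bj] .
        moreover have "eval T M v (f i) \<in> {0..1}" using rg[OF st wi] .
        ultimately show ?thesis using fk res_one[of 1 "eval T M v (f i)"] by simp
      next
        fix j x assume bj: "before r j i" and fi: "f i = All x (f j)"
        have "\<forall>d. eval T M (v(x := d)) (f j) = 1" using IH[OF bj] by blast
        then show ?thesis using fi by simp
      next
        fix a' b c assume fi: "f i = Disj a' (Imp b (SConj b c))"
          and hs: "\<forall>n\<ge>1. \<exists>j. before r j i \<and> f j = Disj a' (Imp b (fpow c n))"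
        have "\<forall>n\<ge>1. eval T M v (Disj a' (Imp b (fpow c n))) = 1"
          using hs IH by metis
        then show ?thesis using inf_sound[OF st wi[unfolded fi]] fi by simp
      qed
    qed
    from last obtain l where "l \<in> Field r" "f l = a" by blast
    then show "is_model T M a" unfolding is_model_def using main by blast
  qed
qed

end
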